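(* Let $\Omega\subset\mathbb{P}(\mathbb{R}^d)$ be a properly convex domain, $\mathcal{C}\subset\Omega$ a non-empty closed convex subset, and $a_1,\dots,a_m\in\mathrm{Aut}(\Omega)$ with $a_j\mathcal{C}=\mathcal{C}$. For $r>0$ let $M_r:=\{x\in\mathcal{C}:H_\Omega(x,a_jx)\le r\text{ for all }1\le j\le m\}$. Then for every $r>0$, $$\mathrm{ConvHull}_\Omega(M_r)\subset M_{2^{d-1}r}.$$
   Context: Properly convex domain: open subset of $\mathbb{P}(\mathbb{R}^d)$ which is a bounded convex set in some affine chart. $H_\Omega$ is the Hilbert metric: $H_\Omega(x,y)=\frac12\log\frac{|x-b||y-a|}{|x-a||y-b|}$ with $a,b$ the boundary points on the line through $x\neq y$ ordered $a,x,y,b$. $\mathrm{ConvHull}_\Omega(X)$ is the smallest convex subset of $\overline{\Omega}$ containing $X$. *)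

theory Defs
  imports "HOL-Analysis.Analysis"
begin

text \<open>Projective space P(R^d) is modelled through R^d = the euclidean space 'a (d = DIM('a)).
A subset of P(R^d) contained in the complement of a hyperplane is represented by a cone
K of nonzero vectors (closed under positive scalings) whose set of rays is the subset.\<close>

definition is_cone :: "'a::euclidean_space set \<Rightarrow> bool" where
  "is_cone K \<longleftrightarrow> 0 \<notin> K \<and> (\<forall>v\<in>K. \<forall>t>0. t *\<^sub>R v \<in> K)"

definition chart_image :: "'a::euclidean_space \<Rightarrow> 'a set \<Rightarrow> 'a set" where
  "chart_image w K = (\<lambda>v. (1 / (w \<bullet> v)) *\<^sub>R v) ` K"

definition bounded_chart :: "'a::euclidean_space \<Rightarrow> 'a set \<Rightarrow> bool" where
  "bounded_chart w K \<longleftrightarrow> (\<forall>v\<in>K. w \<bullet> v > 0) \<and> bounded (chart_image w K)"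

definition properly_convex_domain :: "'a::euclidean_space set \<Rightarrow> bool" where
  "properly_convex_domain K \<longleftrightarrow> is_cone K \<and> open K \<and> K \<noteq> {} \<and>
     (\<exists>w. bounded_chart w K \<and> convex (chart_image w K))"

text \<open>Hilbert metric, computed in an affine chart in which the domain is bounded:
a, b are the boundary points on the line through x, y, ordered a, x, y, b.\<close>
definition hilbert_chart :: "'a::euclidean_space \<Rightarrow> 'a set \<Rightarrow> 'a \<Rightarrow> 'a \<Rightarrow> real" where
  "hilbert_chart w K x y =
    (let x' = (1 / (w \<bullet> x)) *\<^sub>R x; y' = (1 / (w \<bullet> y)) *\<^sub>R y; O' = chart_image w K;
         sa = Sup {s. s \<ge> 0 \<and> x' + s *\<^sub>R (x' - y') \<in> O'};
         sb = Sup {s. s \<ge> 0 \<and> y' + s *\<^sub>R (y' - x') \<in> O'};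
         a = x' + sa *\<^sub>R (x' - y'); b = y' + sb *\<^sub>R (y' - x')
     in if x' = y' then 0
        else ln ((norm (x' - b) * norm (y' - a)) / (norm (x' - a) * norm (y' - b))) / 2)"

definition hilbert_dist :: "'a::euclidean_space set \<Rightarrow> 'a \<Rightarrow> 'a \<Rightarrow> real" where
  "hilbert_dist K x y = hilbert_chart (SOME w. bounded_chart w K \<and> convex (chart_image w K)) K x y"

text \<open>Projective automorphisms of the domain, represented by linear maps preserving the cone.\<close>
definition proj_aut :: "'a::euclidean_space set \<Rightarrow> ('a \<Rightarrow> 'a) \<Rightarrow> bool" where
  "proj_aut K g \<longleftrightarrow> linear g \<and> bij g \<and> g ` K = K"

end

theory Submission
  imports Defs
begin

definition lek :: "'a::euclidean_space set \<Rightarrow> 'a \<Rightarrow> 'a \<Rightarrow> bool" where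
  "lek K p q \<longleftrightarrow> q - p \<in> closure K"

locale hch =
  fixes K :: "'a::euclidean_space set" and w :: 'a
  assumes cone: "is_cone K" and op: "open K" and ne: "K \<noteq> {}"
    and bc: "bounded_chart w K" and cvx: "convex (chart_image w K)"
begin

lemma wpos: "v \<in> K \<Longrightarrow> w \<bullet> v > 0"
  using bc unfolding bounded_chart_def by auto

lemma scal: "v \<in> K \<Longrightarrow> t > 0 \<Longrightarrow> t *\<^sub>R v \<in> K"
  using cone unfolding is_cone_def by auto

lemma zero_notin: "0 \<notin> K" using cone unfolding is_cone_def by auto

lemma O_eq: "chart_image w K = {p \<in> K. w \<bullet> p = 1}"
proof
  show "chart_image w K \<subseteq> {p \<in> K. w \<bullet> p = 1}"
  proof
    fix p assume "p \<in> chart_image w K"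
    then obtain v where v: "v \<in> K" "p = (1 / (w \<bullet> v)) *\<^sub>R v" unfolding chart_image_def by auto
    with wpos[OF v(1)] show "p \<in> {p \<in> K. w \<bullet> p = 1}" using scal[OF v(1), of "1/(w\<bullet>v)"] by auto
  qed
  show "{p \<in> K. w \<bullet> p = 1} \<subseteq> chart_image w K"
  proof
    fix p assume p: "p \<in> {p \<in> K. w \<bullet> p = 1}"
    then have "p = (1 / (w \<bullet> p)) *\<^sub>R p" by simp
    with p show "p \<in> chart_image w K" unfolding chart_image_def by blast
  qed
qed

lemma convK: "convex K"
proof (rule convexI)
  fix u v :: 'a and s t :: real assume u: "u \<in> K" and v: "v \<in> K" and st: "0 \<le> s" "0 \<le> t" "s + t = 1"
  define cu where "cu = w \<bullet> u"
  define cv where "cv = w \<bullet> v"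
  have cu: "cu > 0" "cv > 0" using wpos u v cu_def cv_def by auto
  define c where "c = s * cu + t * cv"
  have c: "c > 0"
  proof (cases "s = 0")
    case True then show ?thesis using st cu by (simp add: c_def)
  next
    case False
    then have "s * cu > 0" using st cu by simp
    moreover have "t * cv \<ge> 0" using st cu by simp
    ultimately show ?thesis by (simp add: c_def)
  qed
  have u': "(1/cu) *\<^sub>R u \<in> chart_image w K" using O_eq scal[OF u] cu cu_def by simp
  have v': "(1/cv) *\<^sub>R v \<in> chart_image w K" using O_eq scal[OF v] cu cv_def by simp
  have "(s*cu/c) *\<^sub>R ((1/cu) *\<^sub>R u) + (t*cv/c) *\<^sub>R ((1/cv) *\<^sub>R v) \<in> chart_image w K"
    apply (rule convexD[OF cvx u' v'])
    using st cu c apply simp_all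
    using c unfolding c_def by (simp flip: add_divide_distrib)
  hence "(s*cu/c) *\<^sub>R ((1/cu) *\<^sub>R u) + (t*cv/c) *\<^sub>R ((1/cv) *\<^sub>R v) \<in> K" using O_eq by auto
  from scal[OF this c] have "c *\<^sub>R ((s*cu/c) *\<^sub>R ((1/cu) *\<^sub>R u) + (t*cv/c) *\<^sub>R ((1/cv) *\<^sub>R v)) \<in> K" .
  moreover have "c *\<^sub>R ((s*cu/c) *\<^sub>R ((1/cu) *\<^sub>R u) + (t*cv/c) *\<^sub>R ((1/cv) *\<^sub>R v)) = s *\<^sub>R u + t *\<^sub>R v"
    using c cu by (simp add: scaleR_add_right)
  ultimately show "s *\<^sub>R u + t *\<^sub>R v \<in> K" by simp
qed

lemma addK: "u \<in> K \<Longrightarrow> v \<in> K \<Longrightarrow> u + v \<in> K"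
proof -
  assume u: "u \<in> K" and v: "v \<in> K"
  have "(1/2) *\<^sub>R u + (1/2) *\<^sub>R v \<in> K" using convexD[OF convK u v] by auto
  from scal[OF this, of 2] show ?thesis by (simp add: scaleR_add_right)
qed

lemma zero_cl: "0 \<in> closure K"
proof -
  obtain u where u: "u \<in> K" using ne by auto
  have "norm u > 0" using u zero_notin by auto
  show ?thesis unfolding closure_approachable
  proof (intro allI impI)
    fix e :: real assume e: "e > 0"
    have "(e/(2*norm u)) *\<^sub>R u \<in> K" using scal[OF u] e \<open>norm u > 0\<close> by auto
    moreover have "dist ((e/(2*norm u)) *\<^sub>R u) 0 < e" using e \<open>norm u > 0\<close> by simp
    ultimately show "\<exists>y\<in>K. dist y 0 < e" by blast
  qed
qed

lemma scal_cl: "p \<in> closure K \<Longrightarrow> t \<ge> 0 \<Longrightarrow> t *\<^sub>R p \<in> closure K"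
proof -
  assume p: "p \<in> closure K" and t: "t \<ge> 0"
  show ?thesis
  proof (cases "t = 0")
    case True then show ?thesis using zero_cl by simp
  next
    case False
    then have t: "t > 0" using t by simp
    have "t *\<^sub>R p \<in> (*\<^sub>R) t ` closure K" using p by blast
    also have "\<dots> = closure ((*\<^sub>R) t ` K)" by (rule closure_scaleR)
    also have "\<dots> \<subseteq> closure K" by (rule closure_mono) (use scal t in auto)
    finally show ?thesis .
  qed
qed

lemma add_cl: "p \<in> closure K \<Longrightarrow> q \<in> closure K \<Longrightarrow> p + q \<in> closure K"
proof -
  assume p: "p \<in> closure K" and q: "q \<in> closure K"
  have "(1/2) *\<^sub>R p + (1/2) *\<^sub>R q \<in> closure K" using convexD[OF convex_closure[OF convK] p q] by auto
  from scal_cl[OF this, of 2] show ?thesis by (simp add: scaleR_add_right)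
qed

lemma K_cl: "u \<in> K \<Longrightarrow> p \<in> closure K \<Longrightarrow> u + p \<in> K"
proof -
  assume u: "u \<in> K" and p: "p \<in> closure K"
  obtain e where e: "e > 0" "ball u e \<subseteq> K" using op u open_contains_ball by blast
  obtain q where q: "q \<in> K" "dist q p < e" using p e unfolding closure_approachable by blast
  have "u + (p - q) \<in> ball u e" using q by (simp add: dist_norm norm_minus_commute)
  hence "u + (p - q) \<in> K" using e by auto
  from addK[OF this q(1)] show ?thesis by simp
qed

lemma w_cl: "p \<in> closure K \<Longrightarrow> w \<bullet> p \<ge> 0"
proof -
  have "closure K \<subseteq> {x. 0 \<le> w \<bullet> x}"
    by (rule closure_minimal) (use wpos in \<open>auto intro: less_imp_le simp: closed_halfspace_ge\<close>)
  then show "p \<in> closure K \<Longrightarrow> w \<bullet> p \<ge> 0" by auto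
qed

lemma cl_sum: "finite S \<Longrightarrow> (\<And>i. i \<in> S \<Longrightarrow> f i \<in> closure K) \<Longrightarrow> sum f S \<in> closure K"
  by (induction S rule: finite_induct) (auto simp: zero_cl add_cl)




lemma O_mem: "p \<in> K \<Longrightarrow> w \<bullet> p = 1 \<Longrightarrow> p \<in> chart_image w K"
  using O_eq by auto

lemma ray_bdd:
  assumes f: "f \<noteq> 0"
  shows "bdd_above {s. s \<ge> 0 \<and> p + s *\<^sub>R f \<in> chart_image w K}"
proof -
  obtain b where b: "\<forall>x\<in>chart_image w K. norm x \<le> b" using bc unfolding bounded_chart_def bounded_iff by auto
  have nf: "norm f > 0" using f by simp
  show ?thesis unfolding bdd_above_def
  proof (intro exI ballI)
    fix s assume "s \<in> {s. s \<ge> 0 \<and> p + s *\<^sub>R f \<in> chart_image w K}"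
    then have s: "s \<ge> 0" "norm (p + s *\<^sub>R f) \<le> b" using b by auto
    have "s * norm f = norm (s *\<^sub>R f)" using s by simp
    also have "\<dots> \<le> norm (p + s *\<^sub>R f) + norm p" using norm_triangle_ineq4[of "p + s *\<^sub>R f" p] by simp
    finally have "s * norm f \<le> b + norm p" using s by simp
    then show "s \<le> (b + norm p) / norm f" using nf by (simp add: field_simps)
  qed
qed

lemma ray_pos:
  assumes p: "p \<in> K" "w \<bullet> p = 1" and f: "f \<noteq> 0" "w \<bullet> f = 0"
  shows "Sup {s. s \<ge> 0 \<and> p + s *\<^sub>R f \<in> chart_image w K} > 0"
proof -
  obtain e where e: "e > 0" "ball p e \<subseteq> K" using op p open_contains_ball by blast
  have nf: "norm f > 0" using f by simp
  define s0 where "s0 = e / (2 * norm f)"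
  have s0: "s0 > 0" using e nf s0_def by simp
  have "p + s0 *\<^sub>R f \<in> ball p e" using e nf s0 by (simp add: s0_def dist_norm)
  hence "p + s0 *\<^sub>R f \<in> K" using e by auto
  moreover have "w \<bullet> (p + s0 *\<^sub>R f) = 1" using p f by (simp add: inner_add_right)
  ultimately have "s0 \<in> {s. s \<ge> 0 \<and> p + s *\<^sub>R f \<in> chart_image w K}" using O_mem s0 by auto
  from cSup_upper[OF this ray_bdd[OF f(1)]] s0 show ?thesis by linarith
qed

lemma ray_bd:
  assumes p: "p \<in> K" "w \<bullet> p = 1" and f: "f \<noteq> 0" "w \<bullet> f = 0"
  shows "p + Sup {s. s \<ge> 0 \<and> p + s *\<^sub>R f \<in> chart_image w K} *\<^sub>R f \<in> closure K"
  unfolding closure_approachable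
proof (intro allI impI)
  define S where "S = {s. s \<ge> 0 \<and> p + s *\<^sub>R f \<in> chart_image w K}"
  fix e :: real assume e: "e > 0"
  have nf: "norm f > 0" using f by simp
  have "0 \<in> S" using p O_mem S_def by auto
  hence Sne: "S \<noteq> {}" by auto
  have "Sup S - e / norm f < Sup S" using e nf by simp
  then obtain s where s: "s \<in> S" "Sup S - e / norm f < s" using less_cSupE[OF _ Sne] by blast
  have "s \<le> Sup S" using cSup_upper[OF s(1)] ray_bdd[OF f(1)] S_def by auto
  have "dist (p + s *\<^sub>R f) (p + Sup S *\<^sub>R f) = (Sup S - s) * norm f"
  proof -
    have "p + s *\<^sub>R f - (p + Sup S *\<^sub>R f) = (s - Sup S) *\<^sub>R f" by (simp add: algebra_simps)
    then show ?thesis using \<open>s \<le> Sup S\<close> by (simp add: dist_norm)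
  qed
  also have "\<dots> < e" using s(2) nf by (simp add: field_simps)
  finally have "dist (p + s *\<^sub>R f) (p + Sup S *\<^sub>R f) < e" .
  moreover have "p + s *\<^sub>R f \<in> K" using s(1) O_eq S_def by auto
  ultimately show "\<exists>y\<in>K. dist y (p + Sup S *\<^sub>R f) < e" unfolding S_def by blast
qed

lemma ray_ge:
  assumes f: "f \<noteq> 0"
    and H: "\<And>s. 0 \<le> s \<Longrightarrow> s * c < 1 \<Longrightarrow> p + s *\<^sub>R f \<in> chart_image w K"
  shows "c > 0 \<and> Sup {s. s \<ge> 0 \<and> p + s *\<^sub>R f \<in> chart_image w K} \<ge> 1 / c"
proof -
  define S where "S = {s. s \<ge> 0 \<and> p + s *\<^sub>R f \<in> chart_image w K}"
  have bdd: "bdd_above S" using ray_bdd[OF f] S_def by simp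
  then obtain b where b: "\<And>s. s \<in> S \<Longrightarrow> s \<le> b" unfolding bdd_above_def by auto
  have c: "c > 0"
  proof (rule ccontr)
    assume "\<not> c > 0"
    have "(max b 0 + 1) * c \<le> 0" by (rule mult_nonneg_nonpos) (use \<open>\<not> c > 0\<close> in auto)
    then have "max b 0 + 1 \<in> S" using H[of "max b 0 + 1"] S_def by simp
    then have "max b 0 + 1 \<le> b" using b by blast
    then show False by (cases "b \<ge> 0") (auto simp: max_def)
  qed
  have "1 / c \<le> Sup S"
  proof (rule dense_le)
    fix s assume s: "s < 1 / c"
    show "s \<le> Sup S"
    proof (cases "s \<ge> 0")
      case True
      have "s * c < 1" using s c by (simp add: field_simps)
      then have "s \<in> S" using H True S_def by simp
      then show ?thesis using cSup_upper bdd by blast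
    next
      case False
      have "0 \<in> S" using H[of 0] S_def by simp
      then have "0 \<le> Sup S" using cSup_upper[OF _ bdd] by blast
      then show ?thesis using False by linarith
    qed
  qed
  then show ?thesis using c S_def by simp
qed


definition nrm :: "'a \<Rightarrow> 'a" where "nrm v = (1 / (w \<bullet> v)) *\<^sub>R v"

lemma nrm_K: "v \<in> K \<Longrightarrow> nrm v \<in> K \<and> w \<bullet> nrm v = 1"
  using scal[of v "1/(w\<bullet>v)"] wpos[of v] by (simp add: nrm_def)

definition sA :: "'a \<Rightarrow> 'a \<Rightarrow> real" where
  "sA u v = Sup {s. s \<ge> 0 \<and> nrm u + s *\<^sub>R (nrm u - nrm v) \<in> chart_image w K}"

lemma hc_formula:
  assumes u: "u \<in> K" and v: "v \<in> K" and ne: "nrm u \<noteq> nrm v"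
  shows "hilbert_chart w K u v = ln ((1 + sA u v) * (1 + sA v u) / (sA u v * sA v u)) / 2"
    and "sA u v > 0" and "sA v u > 0"
proof -
  define e where "e = nrm u - nrm v"
  have e: "e \<noteq> 0" "w \<bullet> e = 0" using ne nrm_K[OF u] nrm_K[OF v] by (auto simp: e_def inner_diff_right)
  have e2: "nrm v - nrm u \<noteq> 0" "w \<bullet> (nrm v - nrm u) = 0" using e by (auto simp: e_def inner_diff_right)
  show pa: "sA u v > 0" unfolding sA_def using ray_pos[OF _ _ e] nrm_K[OF u] e_def by auto
  show pb: "sA v u > 0" unfolding sA_def using ray_pos[OF _ _ e2] nrm_K[OF v] by auto
  have ne': "(1 / (w \<bullet> u)) *\<^sub>R u \<noteq> (1 / (w \<bullet> v)) *\<^sub>R v" using ne by (simp add: nrm_def)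
  have n1: "norm (nrm u - (nrm v + sA v u *\<^sub>R (nrm v - nrm u))) = (1 + sA v u) * norm e"
  proof -
    have "nrm u - (nrm v + sA v u *\<^sub>R (nrm v - nrm u)) = (1 + sA v u) *\<^sub>R e" by (simp add: e_def algebra_simps)
    then show ?thesis using pb by simp
  qed
  have n2: "norm (nrm v - (nrm u + sA u v *\<^sub>R (nrm u - nrm v))) = (1 + sA u v) * norm e"
  proof -
    have "nrm v - (nrm u + sA u v *\<^sub>R (nrm u - nrm v)) = - ((1 + sA u v) *\<^sub>R e)" by (simp add: e_def algebra_simps)
    then show ?thesis using pa by (simp only: norm_minus_cancel) simp
  qed
  have n3: "norm (nrm u - (nrm u + sA u v *\<^sub>R (nrm u - nrm v))) = sA u v * norm e"
    using pa by (simp add: e_def)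
  have n4: "norm (nrm v - (nrm v + sA v u *\<^sub>R (nrm v - nrm u))) = sA v u * norm e"
    using pb by (simp add: e_def norm_minus_commute)
  have "hilbert_chart w K u v = ln ((norm (nrm u - (nrm v + sA v u *\<^sub>R (nrm v - nrm u))) * norm (nrm v - (nrm u + sA u v *\<^sub>R (nrm u - nrm v))))
     / (norm (nrm u - (nrm u + sA u v *\<^sub>R (nrm u - nrm v))) * norm (nrm v - (nrm v + sA v u *\<^sub>R (nrm v - nrm u))))) / 2"
    using ne' unfolding hilbert_chart_def Let_def sA_def nrm_def by simp
  also have "\<dots> = ln ((1 + sA u v) * (1 + sA v u) / (sA u v * sA v u)) / 2"
  proof -
    have nz: "norm e * norm e \<noteq> 0" using e by simp
    have "(1 + sA v u) * norm e * ((1 + sA u v) * norm e) / (sA u v * norm e * (sA v u * norm e))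
        = ((1 + sA u v) * (1 + sA v u) * (norm e * norm e)) / ((sA u v * sA v u) * (norm e * norm e))"
      by (simp add: ac_simps)
    also have "\<dots> = (1 + sA u v) * (1 + sA v u) / (sA u v * sA v u)"
      using nz by (rule mult_divide_mult_cancel_right)
    finally show ?thesis unfolding n1 n2 n3 n4 by simp
  qed
  finally show "hilbert_chart w K u v = ln ((1 + sA u v) * (1 + sA v u) / (sA u v * sA v u)) / 2" .
qed


lemma nrm_scale: "v \<in> K \<Longrightarrow> v = (w \<bullet> v) *\<^sub>R nrm v"
  using wpos[of v] by (simp add: nrm_def)

lemma hc_eq0: "nrm u = nrm v \<Longrightarrow> hilbert_chart w K u v = 0"
  unfolding hilbert_chart_def Let_def nrm_def by simp

lemma ab_ge1:
  assumes v: "v \<in> K" and B: "B \<ge> 0" and h1: "lek K u (A *\<^sub>R v)" and h2: "lek K v (B *\<^sub>R u)"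
  shows "A * B \<ge> 1"
proof -
  have "B *\<^sub>R (A *\<^sub>R v - u) + (B *\<^sub>R u - v) \<in> closure K"
    using h1 h2 B by (auto simp: lek_def intro!: add_cl scal_cl)
  moreover have "B *\<^sub>R (A *\<^sub>R v - u) + (B *\<^sub>R u - v) = (A * B - 1) *\<^sub>R v" by (simp add: algebra_simps)
  ultimately have "(A * B - 1) *\<^sub>R v \<in> closure K" by simp
  then have "w \<bullet> ((A * B - 1) *\<^sub>R v) \<ge> 0" by (rule w_cl)
  then have "(A * B - 1) * (w \<bullet> v) \<ge> 0" by simp
  then show ?thesis using wpos[OF v] by (simp add: zero_le_mult_iff)
qed

lemma side_upper:
  assumes u: "u \<in> K" and v: "v \<in> K" and ne: "nrm u \<noteq> nrm v" and h: "lek K v (B *\<^sub>R u)"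
  shows "(1 + sA u v) / sA u v \<le> B * (w \<bullet> u) / (w \<bullet> v)"
proof -
  define Bn where "Bn = B * (w \<bullet> u) / (w \<bullet> v)"
  have cu: "w \<bullet> u > 0" and cv: "w \<bullet> v > 0" using wpos u v by auto
  have "(1 / (w \<bullet> v)) *\<^sub>R (B *\<^sub>R u - v) \<in> closure K" using h cv by (auto simp: lek_def intro!: scal_cl)
  moreover have "(1 / (w \<bullet> v)) *\<^sub>R (B *\<^sub>R u - v) = Bn *\<^sub>R nrm u - nrm v"
    using cu cv by (simp add: Bn_def nrm_def algebra_simps)
  ultimately have hn: "Bn *\<^sub>R nrm u - nrm v \<in> closure K" by simp
  have e: "nrm u - nrm v \<noteq> 0" using ne by simp
  have H: "nrm u + s *\<^sub>R (nrm u - nrm v) \<in> chart_image w K" if s: "0 \<le> s" "s * (Bn - 1) < 1" for s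
  proof -
    have "(1 - s * (Bn - 1)) *\<^sub>R nrm u \<in> K" using s nrm_K[OF u] scal by simp
    moreover have "s *\<^sub>R (Bn *\<^sub>R nrm u - nrm v) \<in> closure K" using hn s scal_cl by simp
    ultimately have "(1 - s * (Bn - 1)) *\<^sub>R nrm u + s *\<^sub>R (Bn *\<^sub>R nrm u - nrm v) \<in> K" by (rule K_cl)
    moreover have "(1 - s * (Bn - 1)) *\<^sub>R nrm u + s *\<^sub>R (Bn *\<^sub>R nrm u - nrm v) = nrm u + s *\<^sub>R (nrm u - nrm v)"
      by (simp add: algebra_simps)
    moreover have "w \<bullet> (nrm u + s *\<^sub>R (nrm u - nrm v)) = 1" using nrm_K[OF u] nrm_K[OF v] by (simp add: inner_add_right inner_diff_right)
    ultimately show ?thesis using O_mem by simp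
  qed
  from ray_ge[where c="Bn - 1" and p="nrm u", OF e H] have r: "Bn - 1 > 0" "sA u v \<ge> 1 / (Bn - 1)" unfolding sA_def by auto
  have pa: "sA u v > 0" using r by (meson less_le_trans zero_less_divide_1_iff)
  have "1 / sA u v \<le> Bn - 1" using r pa by (simp add: field_simps)
  then have "(1 + sA u v) / sA u v \<le> Bn" using pa by (simp add: field_simps)
  then show ?thesis unfolding Bn_def .
qed

lemma hd_upper:
  assumes u: "u \<in> K" and v: "v \<in> K" and A: "A \<ge> 0" and B: "B \<ge> 0"
    and h1: "lek K u (A *\<^sub>R v)" and h2: "lek K v (B *\<^sub>R u)"
  shows "hilbert_chart w K u v \<le> ln (A * B) / 2"
proof (cases "nrm u = nrm v")
  case True
  have "A * B \<ge> 1" using ab_ge1[OF v B h1 h2] .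
  then show ?thesis using hc_eq0[OF True] by simp
next
  case False
  have cu: "w \<bullet> u > 0" and cv: "w \<bullet> v > 0" using wpos u v by auto
  note f = hc_formula[OF u v False]
  have s1: "(1 + sA u v) / sA u v \<le> B * (w \<bullet> u) / (w \<bullet> v)" by (rule side_upper[OF u v False h2])
  have s2: "(1 + sA v u) / sA v u \<le> A * (w \<bullet> v) / (w \<bullet> u)" by (rule side_upper[OF v u _ h1]) (use False in auto)
  have p1: "(1 + sA u v) / sA u v > 0" "(1 + sA v u) / sA v u > 0" using f by auto
  have "(1 + sA u v) / sA u v * ((1 + sA v u) / sA v u) \<le> (B * (w \<bullet> u) / (w \<bullet> v)) * (A * (w \<bullet> v) / (w \<bullet> u))"
    using s1 s2 p1 by (intro mult_mono) auto
  also have "\<dots> = A * B" using cu cv by (simp add: field_simps)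
  finally have le: "(1 + sA u v) * (1 + sA v u) / (sA u v * sA v u) \<le> A * B" by simp
  have "(1 + sA u v) * (1 + sA v u) / (sA u v * sA v u) > 0" using f by auto
  then have "ln ((1 + sA u v) * (1 + sA v u) / (sA u v * sA v u)) \<le> ln (A * B)"
    using le by (subst ln_le_cancel_iff) auto
  then show ?thesis using f(1) by simp
qed

lemma side_lower:
  assumes u: "u \<in> K" and v: "v \<in> K" and ne: "nrm u \<noteq> nrm v"
  shows "lek K v (((1 + sA u v) / sA u v * (w \<bullet> v) / (w \<bullet> u)) *\<^sub>R u)"
proof -
  have cu: "w \<bullet> u > 0" and cv: "w \<bullet> v > 0" using wpos u v by auto
  have e: "nrm u - nrm v \<noteq> 0" "w \<bullet> (nrm u - nrm v) = 0" using ne nrm_K[OF u] nrm_K[OF v] by (auto simp: inner_diff_right)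
  have pa: "sA u v > 0" using hc_formula[OF u v ne] by auto
  have "nrm u + sA u v *\<^sub>R (nrm u - nrm v) \<in> closure K"
    using ray_bd[OF _ _ e] nrm_K[OF u] unfolding sA_def by auto
  then have "((w \<bullet> v) / sA u v) *\<^sub>R (nrm u + sA u v *\<^sub>R (nrm u - nrm v)) \<in> closure K"
    using pa cv by (intro scal_cl) auto
  moreover have "((w \<bullet> v) / sA u v) *\<^sub>R (nrm u + sA u v *\<^sub>R (nrm u - nrm v))
     = ((1 + sA u v) / sA u v * (w \<bullet> v) / (w \<bullet> u)) *\<^sub>R u - v"
  proof -
    have "((w \<bullet> v) / sA u v) *\<^sub>R (nrm u + sA u v *\<^sub>R (nrm u - nrm v)) = ((w \<bullet> v) / sA u v + w \<bullet> v) *\<^sub>R nrm u - (w \<bullet> v) *\<^sub>R nrm v"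
      using pa by (simp add: algebra_simps)
    also have "(w \<bullet> v) *\<^sub>R nrm v = v" using cv by (simp add: nrm_def)
    also have "((w \<bullet> v) / sA u v + w \<bullet> v) *\<^sub>R nrm u = (((w \<bullet> v) / sA u v + w \<bullet> v) / (w \<bullet> u)) *\<^sub>R u"
      by (simp add: nrm_def divide_inverse)
    also have "((w \<bullet> v) / sA u v + w \<bullet> v) / (w \<bullet> u) = (1 + sA u v) / sA u v * (w \<bullet> v) / (w \<bullet> u)"
      using pa by (simp add: field_simps)
    finally show ?thesis .
  qed
  ultimately show ?thesis unfolding lek_def by simp
qed

lemma hd_lower:
  assumes u: "u \<in> K" and v: "v \<in> K"
  shows "\<exists>A B. A > 0 \<and> B > 0 \<and> lek K u (A *\<^sub>R v) \<and> lek K v (B *\<^sub>R u) \<and> ln (A * B) / 2 = hilbert_chart w K u v"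
proof (cases "nrm u = nrm v")
  case True
  have cu: "w \<bullet> u > 0" and cv: "w \<bullet> v > 0" using wpos u v by auto
  have "((w \<bullet> u) / (w \<bullet> v)) *\<^sub>R v - u = (w \<bullet> u) *\<^sub>R (nrm v - nrm u)"
    using cu cv by (simp add: nrm_def algebra_simps)
  then have 1: "lek K u (((w \<bullet> u) / (w \<bullet> v)) *\<^sub>R v)" using True zero_cl by (simp add: lek_def)
  have "((w \<bullet> v) / (w \<bullet> u)) *\<^sub>R u - v = (w \<bullet> v) *\<^sub>R (nrm u - nrm v)"
    using cu cv by (simp add: nrm_def algebra_simps)
  then have 2: "lek K v (((w \<bullet> v) / (w \<bullet> u)) *\<^sub>R u)" using True zero_cl by (simp add: lek_def)
  have "ln ((w \<bullet> u) / (w \<bullet> v) * ((w \<bullet> v) / (w \<bullet> u))) / 2 = hilbert_chart w K u v"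
    using hc_eq0[OF True] cu cv by simp
  then show ?thesis using 1 2 cu cv by (intro exI[of _ "(w \<bullet> u) / (w \<bullet> v)"] exI[of _ "(w \<bullet> v) / (w \<bullet> u)"]) auto
next
  case False
  have cu: "w \<bullet> u > 0" and cv: "w \<bullet> v > 0" using wpos u v by auto
  note f = hc_formula[OF u v False]
  have 1: "lek K u (((1 + sA v u) / sA v u * (w \<bullet> u) / (w \<bullet> v)) *\<^sub>R v)" by (rule side_lower[OF v u]) (use False in auto)
  have 2: "lek K v (((1 + sA u v) / sA u v * (w \<bullet> v) / (w \<bullet> u)) *\<^sub>R u)" by (rule side_lower[OF u v False])
  have "(1 + sA v u) / sA v u * (w \<bullet> u) / (w \<bullet> v) * ((1 + sA u v) / sA u v * (w \<bullet> v) / (w \<bullet> u))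
     = (1 + sA u v) * (1 + sA v u) / (sA u v * sA v u)" using cu cv f(2) f(3) by (simp add: field_simps)
  then show ?thesis using 1 2 f cu cv
    by (intro exI[of _ "(1 + sA v u) / sA v u * (w \<bullet> u) / (w \<bullet> v)"] exI[of _ "(1 + sA u v) / sA u v * (w \<bullet> v) / (w \<bullet> u)"]) auto
qed


lemma lek_refl: "lek K p p" by (simp add: lek_def zero_cl)

lemma lek_trans: "lek K p q \<Longrightarrow> lek K q r \<Longrightarrow> lek K p r"
  unfolding lek_def using add_cl by fastforce

lemma lek_scale: "lek K p q \<Longrightarrow> c \<ge> 0 \<Longrightarrow> lek K (c *\<^sub>R p) (c *\<^sub>R q)"
  unfolding lek_def using scal_cl by (metis scaleR_diff_right)

lemma lin_cl:
  assumes h: "linear h" "h ` K \<subseteq> K"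
  shows "h ` closure K \<subseteq> closure K"
proof (rule image_closure_subset)
  show "continuous_on (closure K) h" using h(1) by (simp add: linear_continuous_on linear_conv_bounded_linear)
  show "closed (closure K)" by simp
  show "h ` K \<subseteq> closure K" using h(2) closure_subset by blast
qed

lemma lek_lin:
  assumes h: "linear h" "h ` K \<subseteq> K" and l: "lek K p q"
  shows "lek K (h p) (h q)"
proof -
  have "h (q - p) \<in> closure K" using lin_cl[OF h] l unfolding lek_def by blast
  then show ?thesis unfolding lek_def using linear_diff[OF h(1)] by simp
qed

lemma pow_lin:
  assumes g: "linear g" "g ` K \<subseteq> K"
  shows "linear (g ^^ n) \<and> (g ^^ n) ` K \<subseteq> K"
proof (induction n)
  case 0 then show ?case by (simp add: linear_id[unfolded id_def])
next
  case (Suc n)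
  have "linear (g \<circ> (g ^^ n))" using Suc g by (intro linear_compose) auto
  moreover have "(g \<circ> (g ^^ n)) ` K \<subseteq> K" using Suc g by (auto simp: image_comp[symmetric])
  ultimately show ?case by (simp add: o_def)
qed

lemma below_int:
  assumes x: "x \<in> K" and y: "y \<in> K"
  shows "\<exists>t>0. lek K (t *\<^sub>R y) x"
proof -
  obtain e where e: "e > 0" "ball x e \<subseteq> K" using op x open_contains_ball by blast
  define t where "t = e / (2 * (norm y + 1))"
  have hy: "norm y + 1 > 0" using norm_ge_zero[of y] by linarith
  then have "2 * (norm y + 1) > 0" by simp
  then have t: "t > 0" using e by (simp add: t_def)
  have "norm (t *\<^sub>R y) < e"
  proof -
    have "norm (t *\<^sub>R y) = t * norm y" using t by simp
    also have "\<dots> \<le> t * (norm y + 1)" using t by simp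
    also have "\<dots> = e / 2" using t_def hy by (simp add: field_simps)
    finally show ?thesis using e by simp
  qed
  then have "x - t *\<^sub>R y \<in> ball x e" by (simp add: dist_norm)
  then have "x - t *\<^sub>R y \<in> closure K" using e closure_subset by blast
  then show ?thesis using t unfolding lek_def by blast
qed

lemma cross:
  assumes g: "linear g" "g ` K \<subseteq> K" and x: "x \<in> K" and y: "y \<in> K"
    and b: "\<beta> > 0" and c: "\<gamma> > 0"
    and h1: "lek K (g x) (\<beta> *\<^sub>R x)" and h2: "lek K y (\<gamma> *\<^sub>R g y)"
  shows "\<beta> * \<gamma> \<ge> 1"
proof (rule ccontr)
  assume "\<not> \<beta> * \<gamma> \<ge> 1"
  then have q: "\<beta> * \<gamma> < 1" by simp
  have P1: "lek K ((g ^^ n) x) ((\<beta> ^ n) *\<^sub>R x)" for n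
  proof (induction n)
    case 0 then show ?case by (simp add: lek_refl)
  next
    case (Suc n)
    have "lek K (g ((g ^^ n) x)) (g ((\<beta> ^ n) *\<^sub>R x))" by (rule lek_lin[OF g Suc])
    also have "g ((\<beta> ^ n) *\<^sub>R x) = (\<beta> ^ n) *\<^sub>R g x" using linear_scale[OF g(1)] by simp
    finally have 1: "lek K ((g ^^ Suc n) x) ((\<beta> ^ n) *\<^sub>R g x)" by simp
    have "lek K ((\<beta> ^ n) *\<^sub>R g x) ((\<beta> ^ n) *\<^sub>R (\<beta> *\<^sub>R x))" using lek_scale[OF h1] b by simp
    then have 2: "lek K ((\<beta> ^ n) *\<^sub>R g x) ((\<beta> ^ Suc n) *\<^sub>R x)" by (simp add: mult.commute)
    show ?case using lek_trans[OF 1 2] .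
  qed
  have P2: "lek K y ((\<gamma> ^ n) *\<^sub>R (g ^^ n) y)" for n
  proof (induction n)
    case 0 then show ?case by (simp add: lek_refl)
  next
    case (Suc n)
    note L = pow_lin[OF g, of n]
    have "lek K ((g ^^ n) y) ((g ^^ n) (\<gamma> *\<^sub>R g y))" using lek_lin[OF _ _ h2] L by blast
    also have "(g ^^ n) (\<gamma> *\<^sub>R g y) = \<gamma> *\<^sub>R (g ^^ Suc n) y"
      using linear_scale[of "g ^^ n"] L by (simp add: funpow_Suc_right del: funpow.simps)
    finally have "lek K ((\<gamma> ^ n) *\<^sub>R (g ^^ n) y) ((\<gamma> ^ n) *\<^sub>R (\<gamma> *\<^sub>R (g ^^ Suc n) y))"
      using c by (intro lek_scale) auto
    then have "lek K ((\<gamma> ^ n) *\<^sub>R (g ^^ n) y) ((\<gamma> ^ Suc n) *\<^sub>R (g ^^ Suc n) y)" by (simp add: mult.commute)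
    then show ?case using lek_trans[OF Suc] by blast
  qed
  obtain t1 where t1: "t1 > 0" "lek K (t1 *\<^sub>R y) x" using below_int[OF x y] by blast
  obtain t2 where t2: "t2 > 0" "lek K (t2 *\<^sub>R x) y" using below_int[OF y x] by blast
  have P3: "lek K (t2 *\<^sub>R x) (((\<beta> * \<gamma>) ^ n / t1) *\<^sub>R x)" for n
  proof -
    note L = pow_lin[OF g, of n]
    have "lek K ((1/t1) *\<^sub>R (t1 *\<^sub>R y)) ((1/t1) *\<^sub>R x)" using lek_scale[OF t1(2), of "1/t1"] t1 by simp
    moreover have "(1/t1) *\<^sub>R (t1 *\<^sub>R y) = y" using t1 by simp
    ultimately have "lek K y ((1/t1) *\<^sub>R x)" by simp
    then have "lek K ((g ^^ n) y) ((g ^^ n) ((1/t1) *\<^sub>R x))" using lek_lin L by blast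
    also have "(g ^^ n) ((1/t1) *\<^sub>R x) = (1/t1) *\<^sub>R (g ^^ n) x" using linear_scale L by blast
    finally have "lek K ((g ^^ n) y) ((1/t1) *\<^sub>R (g ^^ n) x)" .
    moreover have "lek K ((1/t1) *\<^sub>R (g ^^ n) x) ((1/t1) *\<^sub>R ((\<beta> ^ n) *\<^sub>R x))" using lek_scale[OF P1, of "1/t1"] t1 by simp
    ultimately have "lek K ((g ^^ n) y) ((1/t1) *\<^sub>R ((\<beta> ^ n) *\<^sub>R x))" by (rule lek_trans)
    then have "lek K ((\<gamma> ^ n) *\<^sub>R (g ^^ n) y) ((\<gamma> ^ n) *\<^sub>R ((1/t1) *\<^sub>R ((\<beta> ^ n) *\<^sub>R x)))" using c by (intro lek_scale) auto
    then have "lek K y ((\<gamma> ^ n) *\<^sub>R ((1/t1) *\<^sub>R ((\<beta> ^ n) *\<^sub>R x)))" using lek_trans[OF P2] by blast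
    then have "lek K (t2 *\<^sub>R x) ((\<gamma> ^ n) *\<^sub>R ((1/t1) *\<^sub>R ((\<beta> ^ n) *\<^sub>R x)))" using lek_trans[OF t2(2)] by blast
    moreover have "(\<gamma> ^ n) *\<^sub>R ((1/t1) *\<^sub>R ((\<beta> ^ n) *\<^sub>R x)) = ((\<beta> * \<gamma>) ^ n / t1) *\<^sub>R x"
      by (simp add: power_mult_distrib mult.commute)
    ultimately show ?thesis by metis
  qed
  have "0 < t1 * t2" using t1 t2 by simp
  obtain n where n: "(\<beta> * \<gamma>) ^ n < t1 * t2" using real_arch_pow_inv[OF \<open>0 < t1 * t2\<close> q] by blast
  have "(((\<beta> * \<gamma>) ^ n / t1) *\<^sub>R x - t2 *\<^sub>R x) \<in> closure K" using P3[of n] unfolding lek_def .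
  moreover have "((\<beta> * \<gamma>) ^ n / t1) *\<^sub>R x - t2 *\<^sub>R x = ((\<beta> * \<gamma>) ^ n / t1 - t2) *\<^sub>R x"
    by (simp add: scaleR_diff_left)
  ultimately have "((\<beta> * \<gamma>) ^ n / t1 - t2) *\<^sub>R x \<in> closure K" by simp
  then have "w \<bullet> (((\<beta> * \<gamma>) ^ n / t1 - t2) *\<^sub>R x) \<ge> 0" by (rule w_cl)
  then have "((\<beta> * \<gamma>) ^ n / t1 - t2) * (w \<bullet> x) \<ge> 0" by simp
  then have "(\<beta> * \<gamma>) ^ n / t1 - t2 \<ge> 0" using wpos[OF x] by (simp add: zero_le_mult_iff)
  then show False using n t1 by (simp add: field_simps)
qed




lemma dim1:
  assumes d: "DIM('a) = 1" and u: "u \<in> K" and v: "v \<in> K"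
  shows "hilbert_chart w K u v = 0"
proof -
  obtain b where b: "Basis = {b::'a}" using card_1_singletonE[OF d] by blast
  have rep: "x = (x \<bullet> b) *\<^sub>R b" for x :: 'a
  proof -
    have "x = (\<Sum>b'\<in>Basis. (x \<bullet> b') *\<^sub>R b')" by (rule euclidean_representation[symmetric])
    also have "\<dots> = (x \<bullet> b) *\<^sub>R b" unfolding b by simp
    finally show ?thesis .
  qed
  have n: "nrm x = (1 / (w \<bullet> b)) *\<^sub>R b" if x: "x \<in> K" for x
  proof -
    have xr: "x = (x \<bullet> b) *\<^sub>R b" by (rule rep)
    have "w \<bullet> x = w \<bullet> ((x \<bullet> b) *\<^sub>R b)" using xr by (rule arg_cong)
    then have wx: "w \<bullet> x = (x \<bullet> b) * (w \<bullet> b)" by (simp only: inner_scaleR_right)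
    have "w \<bullet> x > 0" using wpos x by simp
    then have xb: "x \<bullet> b \<noteq> 0" using wx by auto
    have "nrm x = (1 / ((x \<bullet> b) * (w \<bullet> b))) *\<^sub>R ((x \<bullet> b) *\<^sub>R b)"
      unfolding nrm_def wx using xr by (rule arg_cong)
    also have "\<dots> = (1 / (w \<bullet> b)) *\<^sub>R b" using xb by simp
    finally show ?thesis .
  qed
  show ?thesis using n[OF u] n[OF v] hc_eq0 by simp
qed

lemma key:
  assumes g: "linear g" "g ` K \<subseteq> K" and S: "finite S" "S \<subseteq> K"
    and Hr: "\<And>x. x \<in> S \<Longrightarrow> hilbert_chart w K x (g x) \<le> r"
    and u: "\<And>x. x \<in> S \<Longrightarrow> u x \<ge> 0" "sum u S = 1"
    and z: "z = (\<Sum>x\<in>S. u x *\<^sub>R x)" "z \<in> K"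
  shows "hilbert_chart w K z (g z) \<le> 2 * r"
proof -
  have "\<forall>x\<in>S. \<exists>p. fst p > 0 \<and> snd p > 0 \<and> lek K x (fst p *\<^sub>R g x) \<and> lek K (g x) (snd p *\<^sub>R x)
          \<and> ln (fst p * snd p) / 2 = hilbert_chart w K x (g x)"
  proof
    fix x assume x: "x \<in> S"
    then have "x \<in> K" "g x \<in> K" using S g by auto
    from hd_lower[OF this] show "\<exists>p. fst p > 0 \<and> snd p > 0 \<and> lek K x (fst p *\<^sub>R g x) \<and> lek K (g x) (snd p *\<^sub>R x)
          \<and> ln (fst p * snd p) / 2 = hilbert_chart w K x (g x)" by auto
  qed
  from bchoice[OF this] obtain P where P: "\<forall>x\<in>S. fst (P x) > 0 \<and> snd (P x) > 0 \<and> lek K x (fst (P x) *\<^sub>R g x) \<and> lek K (g x) (snd (P x) *\<^sub>R x)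
          \<and> ln (fst (P x) * snd (P x)) / 2 = hilbert_chart w K x (g x)" by blast
  define al where "al x = fst (P x)" for x
  define be where "be x = snd (P x)" for x
  have P': "\<And>x. x \<in> S \<Longrightarrow> al x > 0 \<and> be x > 0 \<and> lek K x (al x *\<^sub>R g x) \<and> lek K (g x) (be x *\<^sub>R x)
          \<and> ln (al x * be x) / 2 \<le> r"
  proof -
    fix x assume x: "x \<in> S"
    from bspec[OF P x] Hr[OF x] show "al x > 0 \<and> be x > 0 \<and> lek K x (al x *\<^sub>R g x) \<and> lek K (g x) (be x *\<^sub>R x)
          \<and> ln (al x * be x) / 2 \<le> r" unfolding al_def be_def by simp
  qed
  have Sne: "S \<noteq> {}" using u(2) by auto
  define Am where "Am = Max (al ` S)"
  define Bm where "Bm = Max (be ` S)"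
  have "Am \<in> al ` S" using Max_in[of "al ` S"] S(1) Sne Am_def by simp
  then obtain p where p: "p \<in> S" "al p = Am" by auto
  have "Bm \<in> be ` S" using Max_in[of "be ` S"] S(1) Sne Bm_def by simp
  then obtain q where q: "q \<in> S" "be q = Bm" by auto
  have Amx: "x \<in> S \<Longrightarrow> al x \<le> Am" for x using S Am_def by simp
  have Bmx: "x \<in> S \<Longrightarrow> be x \<le> Bm" for x using S Bm_def by simp
  have gz: "g z = (\<Sum>x\<in>S. u x *\<^sub>R g x)" unfolding z(1) using linear_sum[OF g(1), of "\<lambda>x. u x *\<^sub>R x" S] linear_scale[OF g(1)] by simp
  have l1: "lek K z (Am *\<^sub>R g z)"
  proof -
    have "Am *\<^sub>R g z - z = (\<Sum>x\<in>S. u x *\<^sub>R ((Am - al x) *\<^sub>R g x + (al x *\<^sub>R g x - x)))"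
    proof -
      have "(\<Sum>x\<in>S. u x *\<^sub>R ((Am - al x) *\<^sub>R g x + (al x *\<^sub>R g x - x)))
          = (\<Sum>x\<in>S. Am *\<^sub>R (u x *\<^sub>R g x) - u x *\<^sub>R x)"
        by (rule sum.cong) (auto simp: algebra_simps)
      also have "\<dots> = Am *\<^sub>R (\<Sum>x\<in>S. u x *\<^sub>R g x) - (\<Sum>x\<in>S. u x *\<^sub>R x)"
        by (simp add: sum_subtractf scaleR_sum_right)
      finally show ?thesis unfolding gz unfolding z(1) by simp
    qed
    also have "\<dots> \<in> closure K"
    proof (rule cl_sum[OF S(1)])
      fix x assume x: "x \<in> S"
      have "g x \<in> K" using x S g by auto
      then have "(Am - al x) *\<^sub>R g x \<in> closure K" using Amx[OF x] closure_subset by (intro scal_cl) auto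
      moreover have "al x *\<^sub>R g x - x \<in> closure K" using P'[OF x] unfolding lek_def by simp
      ultimately have "(Am - al x) *\<^sub>R g x + (al x *\<^sub>R g x - x) \<in> closure K" by (rule add_cl)
      then show "u x *\<^sub>R ((Am - al x) *\<^sub>R g x + (al x *\<^sub>R g x - x)) \<in> closure K"
        using u(1)[OF x] by (rule scal_cl)
    qed
    finally show ?thesis unfolding lek_def .
  qed
  have l2: "lek K (g z) (Bm *\<^sub>R z)"
  proof -
    have "Bm *\<^sub>R z - g z = (\<Sum>x\<in>S. u x *\<^sub>R ((Bm - be x) *\<^sub>R x + (be x *\<^sub>R x - g x)))"
    proof -
      have "(\<Sum>x\<in>S. u x *\<^sub>R ((Bm - be x) *\<^sub>R x + (be x *\<^sub>R x - g x)))
          = (\<Sum>x\<in>S. Bm *\<^sub>R (u x *\<^sub>R x) - u x *\<^sub>R g x)"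
        by (rule sum.cong) (auto simp: algebra_simps)
      also have "\<dots> = Bm *\<^sub>R (\<Sum>x\<in>S. u x *\<^sub>R x) - (\<Sum>x\<in>S. u x *\<^sub>R g x)"
        by (simp add: sum_subtractf scaleR_sum_right)
      finally show ?thesis unfolding gz unfolding z(1) by simp
    qed
    also have "\<dots> \<in> closure K"
    proof (rule cl_sum[OF S(1)])
      fix x assume x: "x \<in> S"
      have "x \<in> K" using x S by auto
      then have "(Bm - be x) *\<^sub>R x \<in> closure K" using Bmx[OF x] closure_subset by (intro scal_cl) auto
      moreover have "be x *\<^sub>R x - g x \<in> closure K" using P'[OF x] unfolding lek_def by simp
      ultimately have "(Bm - be x) *\<^sub>R x + (be x *\<^sub>R x - g x) \<in> closure K" by (rule add_cl)
      then show "u x *\<^sub>R ((Bm - be x) *\<^sub>R x + (be x *\<^sub>R x - g x)) \<in> closure K"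
        using u(1)[OF x] by (rule scal_cl)
    qed
    finally show ?thesis unfolding lek_def .
  qed
  have pp: "al p > 0" "be p > 0" "al q > 0" "be q > 0" using P' p q by auto
  have gzK: "g z \<in> K" using z g by auto
  have H: "hilbert_chart w K z (g z) \<le> ln (Am * Bm) / 2"
    using hd_upper[OF z(2) gzK _ _ l1 l2] pp p q by simp
  have cr: "be p * al q \<ge> 1"
    using cross[OF g, of p q "be p" "al q"] P'[OF p(1)] P'[OF q(1)] S p q by auto
  have "Am * Bm \<le> (al p * be p) * (al q * be q)"
  proof -
    have "Am * Bm = al p * be q * 1" using p q by simp
    also have "\<dots> \<le> al p * be q * (be p * al q)" using cr pp by (intro mult_left_mono) auto
    finally show ?thesis by (simp add: ac_simps)
  qed
  then have "ln (Am * Bm) \<le> ln ((al p * be p) * (al q * be q))" using pp p q by (subst ln_le_cancel_iff) auto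
  also have "\<dots> = ln (al p * be p) + ln (al q * be q)" using pp by (simp add: ln_mult)
  also have "\<dots> \<le> 2 * r + 2 * r" using P'[OF p(1)] P'[OF q(1)] by auto
  finally show ?thesis using H by simp
qed

end

theorem mainTheorem14:
  fixes K C :: "'a::euclidean_space set" and a :: "nat \<Rightarrow> 'a \<Rightarrow> 'a" and m :: nat
    and M :: "real \<Rightarrow> 'a set"
  assumes "properly_convex_domain K"
    and "is_cone C" and "C \<subseteq> K" and "C \<noteq> {}" and "convex C"
    and "closedin (top_of_set K) C"
    and "\<And>j. j \<in> {1..m} \<Longrightarrow> proj_aut K (a j) \<and> a j ` C = C"
    and "M = (\<lambda>r. {x \<in> C. \<forall>j\<in>{1..m}. hilbert_dist K x (a j x) \<le> r})"
    and "r > 0"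
  shows "convex hull (M r) \<subseteq> M (2 ^ (DIM('a) - 1) * r)"
proof -
  note pcd = assms(1)[unfolded properly_convex_domain_def]
  define w where "w = (SOME w. bounded_chart w K \<and> convex (chart_image w K))"
  have c1: "is_cone K" "open K" "K \<noteq> {}" using pcd by simp_all
  have ex: "\<exists>w. bounded_chart w K \<and> convex (chart_image w K)" using pcd by simp
  have wp: "bounded_chart w K \<and> convex (chart_image w K)"
    unfolding w_def by (rule someI_ex[OF ex])
  interpret hch K w by (rule hch.intro) (use c1 wp in simp_all)
  have hd: "hilbert_dist K x y = hilbert_chart w K x y" for x y
    unfolding hilbert_dist_def w_def ..
  have MC: "M r \<subseteq> C" using assms(8) by auto
  have hullC: "convex hull (M r) \<subseteq> C" using MC assms(5) by (rule hull_minimal)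
  show ?thesis
  proof
    fix z assume zh: "z \<in> convex hull (M r)"
    then obtain S u where Su: "finite S" "S \<subseteq> M r" "\<forall>x\<in>S. 0 \<le> u x" "sum u S = 1" "(\<Sum>v\<in>S. u v *\<^sub>R v) = z"
      unfolding convex_hull_explicit by blast
    have zC: "z \<in> C" using zh hullC by auto
    have zK: "z \<in> K" using zC assms(3) by auto
    have "hilbert_dist K z (a j z) \<le> 2 ^ (DIM('a) - 1) * r" if j: "j \<in> {1..m}" for j
    proof -
      have pa: "linear (a j)" "a j ` K = K" using assms(7)[OF j] unfolding proj_aut_def by auto
      have ajK: "a j z \<in> K" using pa zK by auto
      show ?thesis
      proof (cases "DIM('a) = 1")
        case True
        then show ?thesis using dim1[OF True zK ajK] hd assms(9) by simp
      next
        case False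
        then have "DIM('a) - 1 \<ge> 1" using DIM_positive[where 'a='a] by linarith
        then have "(2::real) ^ 1 \<le> 2 ^ (DIM('a) - 1)" by (intro power_increasing) auto
        then have le2: "2 * r \<le> 2 ^ (DIM('a) - 1) * r" using assms(9) by (intro mult_right_mono) auto
        have SK: "S \<subseteq> K" using Su(2) MC assms(3) by auto
        have Hr: "hilbert_chart w K x (a j x) \<le> r" if x: "x \<in> S" for x
          using Su(2) x j assms(8) hd by auto
        have "hilbert_chart w K z (a j z) \<le> 2 * r"
          using key[OF pa(1) _ Su(1) SK Hr, of u z] pa(2) Su(3) Su(4) Su(5) zK by auto
        then show ?thesis using le2 hd by simp
      qed
    qed
    then show "z \<in> M (2 ^ (DIM('a) - 1) * r)" using zC assms(8) by simp
  qed
qed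

end
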